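(* Let $(x_n)_{n\in\mathbb{N}}$ be a sequence of finite binary trees with $\lim_{n\to\infty}|x_n|=\infty$. Then $(x_n)$ converges in the subtree size topology (i.e. $\lim_{n\to\infty}t(x_n,u)$ exists for all $u\in\mathbb{V}$) if and only if the sequence of probability measures $(\mu_{x_n})_{n\in\mathbb{N}}$ on $\mathbb{V}_\infty$ converges weakly; and in that case, if $\mu_{x_n}\to\mu$ weakly, then $\lim_{n\to\infty}t(x_n,u)=\mu(B_u)$ for all $u\in\mathbb{V}$.
   Context: $\mathbb{V}=\bigsqcup_{k\ge0}\{0,1\}^k$ is the set of finite $0$-$1$ words, with concatenation $u+v$, appending letters $u0,u1$, and prefix order. A finite binary tree is a finite prefix-stable subset $x\subseteq\mathbb{V}$ (if $(v_1,\dots,v_k)\in x$, $k>0$, then $(v_1,\dots,v_{k-1})\in x$); $|x|$ is its number of nodes. $t(x,u)=\frac{1}{|x|}|\{v\in\mathbb{V}: u+v\in x\}|$. The external boundary of $x$ is $\partial x=\{v\in\mathbb{V}\setminus x:\ v=w0 \text{ or } v=w1 \text{ for some } w\in x\}$ (it has $|x|+1$ elements when $x\neq\emptyset$). $\mathbb{V}_\infty=\{0,1\}^{\mathbb{N}}$ carries the ultrametric $d(v,w)=2^{-|v\wedge w|}$, where $|v\wedge w|$ is the length of the longest common prefix, making it a compact metric space whose Borel $\sigma$-field is generated by the coordinate projections; weak convergence of probability measures refers to this space. $B_u=\{v\in\mathbb{V}_\infty: u\text{ is a prefix of }v\}$. For $v=(v_1,\dots,v_k)\in\mathbb{V}$,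 $\mathrm{unif}(B_v)$ denotes the law of $(v_1,\dots,v_k,\eta_1,\eta_2,\dots)$ with $\eta_i$ i.i.d. uniform on $\{0,1\}$. For a finite binary tree $x$, $\mu_x=\frac{1}{|x|+1}\sum_{v\in\partial x}\mathrm{unif}(B_v)$. *)

theory Defs
  imports "HOL-Probability.Probability"
begin

text \<open>Finite 0-1 words are bool lists (False = 0, True = 1); concatenation is @,
  appending a letter is xs @ [b]. Infinite words are functions nat => bool.\<close>

type_synonym word = "bool list"
type_synonym iword = "nat \<Rightarrow> bool"

definition is_tree :: "word set \<Rightarrow> bool" where
  "is_tree x \<longleftrightarrow> finite x \<and> (\<forall>v b. v @ [b] \<in> x \<longrightarrow> v \<in> x)"

definition subtree_size :: "word set \<Rightarrow> word \<Rightarrow> real" where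
  "subtree_size x u = real (card {v. u @ v \<in> x}) / real (card x)"

definition ext_boundary :: "word set \<Rightarrow> word set" where
  "ext_boundary x = {v. v \<notin> x \<and> (\<exists>w\<in>x. v = w @ [False] \<or> v = w @ [True])}"

definition dist_inf :: "iword \<Rightarrow> iword \<Rightarrow> real" where
  "dist_inf v w = (if v = w then 0 else 2 powr (- real (LEAST n. v n \<noteq> w n)))"

text \<open>Borel sigma-field = product sigma-field generated by coordinate projections.\<close>
definition Vinf_space :: "iword measure" where
  "Vinf_space = PiM UNIV (\<lambda>_. count_space UNIV)"

definition cylinder :: "word \<Rightarrow> iword set" where
  "cylinder u = {v. \<forall>i<length u. v i = u ! i}"

definition unif_cyl :: "word \<Rightarrow> iword measure" where
  "unif_cyl v = distr (PiM UNIV (\<lambda>_. measure_pmf (pmf_of_set (UNIV :: bool set)))) Vinf_space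
     (\<lambda>\<eta> i. if i < length v then v ! i else \<eta> (i - length v))"

definition mu_tree :: "word set \<Rightarrow> iword measure" where
  "mu_tree x = measure_of UNIV (sets Vinf_space)
     (\<lambda>A. ennreal (1 / (real (card x) + 1)) * (\<Sum>v\<in>ext_boundary x. emeasure (unif_cyl v) A))"

definition prob_measure_Vinf :: "iword measure \<Rightarrow> bool" where
  "prob_measure_Vinf M \<longleftrightarrow> prob_space M \<and> sets M = sets Vinf_space"

definition continuous_Vinf :: "(iword \<Rightarrow> real) \<Rightarrow> bool" where
  "continuous_Vinf f \<longleftrightarrow>
     (\<forall>v. \<forall>e>0. \<exists>\<delta>>0. \<forall>w. dist_inf v w < \<delta> \<longrightarrow> \<bar>f w - f v\<bar> < e)"

definition weak_conv_Vinf :: "(nat \<Rightarrow> iword measure) \<Rightarrow> iword measure \<Rightarrow> bool" where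
  "weak_conv_Vinf M N \<longleftrightarrow>
     (\<forall>f. continuous_Vinf f \<and> (\<exists>B. \<forall>v. \<bar>f v\<bar> \<le> B) \<longrightarrow>
        (\<lambda>n. integral\<^sup>L (M n) f) \<longlonglongrightarrow> integral\<^sup>L N f)"

end

theory Submission
  imports Defs
begin


lemma space_Vinf[simp]: "space Vinf_space = UNIV"
  by (simp add: Vinf_space_def space_PiM)

lemma cylinder_sets[measurable]: "cylinder u \<in> sets Vinf_space"
proof -
  have "cylinder u = {v \<in> space Vinf_space. \<forall>i\<in>{..<length u}. v i = u ! i}"
    by (auto simp: cylinder_def)
  also have "\<dots> \<in> sets Vinf_space" unfolding Vinf_space_def
    by measurable
  finally show ?thesis .
qed

definition gmap :: "word \<Rightarrow> iword \<Rightarrow> iword" where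
  "gmap v \<eta> = (\<lambda>i. if i < length v then v ! i else \<eta> (i - length v))"

abbreviation "Bern \<equiv> PiM UNIV (\<lambda>_::nat. measure_pmf (pmf_of_set (UNIV :: bool set)))"

lemma gmap_meas: "gmap v \<in> Bern \<rightarrow>\<^sub>M Vinf_space"
  unfolding Vinf_space_def gmap_def
proof (rule measurable_PiM_single')
  fix i :: nat
  show "(\<lambda>\<omega>. if i < length v then v ! i else \<omega> (i - length v)) \<in> Bern \<rightarrow>\<^sub>M count_space UNIV"
  proof (cases "i < length v")
    case True then show ?thesis by simp
  next
    case False
    have "(\<lambda>\<omega>. \<omega> (i - length v)) \<in> Bern \<rightarrow>\<^sub>M measure_pmf (pmf_of_set (UNIV :: bool set))"
      by (rule measurable_component_singleton) simp
    then have "(\<lambda>\<omega>. \<omega> (i - length v)) \<in> Bern \<rightarrow>\<^sub>M count_space UNIV"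
      by (simp add: measurable_def)
    then show ?thesis using False by simp
  qed
qed (simp add: space_PiM)

lemma unif_prob: "prob_space (unif_cyl v)"
  unfolding unif_cyl_def gmap_def[symmetric]
  by (rule prob_space.prob_space_distr[OF prob_space_PiM gmap_meas])
     (simp add: measure_pmf.prob_space_axioms)

lemma sets_unif[simp]: "sets (unif_cyl v) = sets Vinf_space"
  by (simp add: unif_cyl_def)

lemma unif_cyl_prefix:
  assumes "v = u @ z"
  shows "measure (unif_cyl v) (cylinder u) = 1"
proof -
  have "gmap v -` cylinder u \<inter> space Bern = space Bern"
    using assms by (auto simp: gmap_def cylinder_def nth_append)
  then have "emeasure (unif_cyl v) (cylinder u) = emeasure Bern (space Bern)"
    unfolding unif_cyl_def gmap_def[symmetric]
    by (simp add: emeasure_distr[OF gmap_meas])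
  also have "\<dots> = 1"
    by (rule prob_space.emeasure_space_1[OF prob_space_PiM]) (simp add: measure_pmf.prob_space_axioms)
  finally show ?thesis by (simp add: measure_def)
qed

lemma incomparable_nth:
  assumes "\<not> (\<exists>z. v = u @ z)" "\<not> (\<exists>z. u = v @ z)"
  shows "\<exists>i < min (length u) (length v). u ! i \<noteq> v ! i"
proof (rule ccontr)
  assume H: "\<not> ?thesis"
  show False
  proof (cases "length u \<le> length v")
    case True
    have "v = u @ drop (length u) v"
      by (rule nth_equalityI) (use H True in \<open>auto simp: nth_append\<close>)
    then show False using assms by blast
  next
    case False
    have "u = v @ drop (length v) u"
      by (rule nth_equalityI) (use H False in \<open>auto simp: nth_append\<close>)
    then show False using assms by blast
  qed
qed

lemma unif_cyl_incomp:
  assumes "\<not> (\<exists>z. v = u @ z)" "\<not> (\<exists>z. u = v @ z)"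
  shows "measure (unif_cyl v) (cylinder u) = 0"
proof -
  obtain i where i: "i < length u" "i < length v" "u ! i \<noteq> v ! i"
    using incomparable_nth[OF assms] by auto
  have "gmap v -` cylinder u \<inter> space Bern = {}"
    using i by (auto simp: gmap_def cylinder_def)
  then have "emeasure (unif_cyl v) (cylinder u) = 0"
    unfolding unif_cyl_def gmap_def[symmetric]
    by (simp add: emeasure_distr[OF gmap_meas])
  then show ?thesis by (simp add: measure_def)
qed

lemma unif_cyl_le1: "measure (unif_cyl v) (cylinder u) \<le> 1"
  using prob_space.prob_le_1[OF unif_prob] by blast


lemma tree_prefix: "is_tree x \<Longrightarrow> w @ z \<in> x \<Longrightarrow> w \<in> x"
proof (induction z rule: rev_induct)
  case Nil then show ?case by simp
next
  case (snoc a z)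
  then show ?case unfolding is_tree_def by (metis append_assoc)
qed

lemma finite_bd: "finite x \<Longrightarrow> finite (ext_boundary x)"
proof -
  assume "finite x"
  have "ext_boundary x \<subseteq> (\<lambda>(w,b). w @ [b]) ` (x \<times> UNIV)"
    unfolding ext_boundary_def by force
  moreover have "finite ((\<lambda>(w,b). w @ [b]) ` (x \<times> (UNIV::bool set)))"
    using \<open>finite x\<close> by simp
  ultimately show ?thesis by (rule finite_subset)
qed

lemma count_E:
  assumes tr: "is_tree x"
  shows "card {v \<in> ext_boundary x. \<exists>z. v = u @ z \<and> z \<noteq> []}
       = card {w. u @ w \<in> x} + (if u \<in> x then 1 else 0)"
proof -
  define S where "S = {w\<in>x. \<exists>z. w = u @ z}"
  define T where "T = {w\<in>x. \<exists>z. w = u @ z \<and> z \<noteq> []}"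
  define E where "E = {v \<in> ext_boundary x. \<exists>z. v = u @ z \<and> z \<noteq> []}"
  have fx: "finite x" using tr by (simp add: is_tree_def)
  have fS: "finite S" "finite T" using fx by (auto simp: S_def T_def)
  have fE: "finite E" using finite_bd[OF fx] by (auto simp: E_def)
  have bij: "bij_betw (\<lambda>(w,b). w @ [b]) (S \<times> UNIV) (T \<union> E)"
  proof (rule bij_betw_imageI)
    show "inj_on (\<lambda>(w,b). w @ [b]) (S \<times> UNIV)" by (auto simp: inj_on_def)
    show "(\<lambda>(w,b). w @ [b]) ` (S \<times> UNIV) = T \<union> E"
    proof
      show "(\<lambda>(w,b). w @ [b]) ` (S \<times> UNIV) \<subseteq> T \<union> E"
        by (auto simp: S_def T_def E_def ext_boundary_def)
      show "T \<union> E \<subseteq> (\<lambda>(w,b). w @ [b]) ` (S \<times> UNIV)"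
      proof
        fix t assume "t \<in> T \<union> E"
        then obtain z where z: "t = u @ z" "z \<noteq> []" and tx: "t \<in> x \<or> t \<in> ext_boundary x"
          by (auto simp: T_def E_def)
        obtain z' b where zb: "z = z' @ [b]" using z(2) by (metis rev_exhaust)
        have "u @ z' \<in> x"
        proof (cases "t \<in> x")
          case True then show ?thesis using tr z zb tree_prefix[of x "u @ z'" "[b]"] by simp
        next
          case False
          then obtain w where w: "w \<in> x" "t = w @ [False] \<or> t = w @ [True]"
            using tx by (auto simp: ext_boundary_def)
          then have "w = u @ z'" using z zb by auto
          then show ?thesis using w by simp
        qed
        then show "t \<in> (\<lambda>(w,b). w @ [b]) ` (S \<times> UNIV)"
          using z zb by (auto simp: S_def image_iff intro!: bexI[of _ "(u @ z', b)"])
      qed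
    qed
  qed
  have disj: "T \<inter> E = {}" by (auto simp: T_def E_def ext_boundary_def)
  have "card (S \<times> (UNIV::bool set)) = card (T \<union> E)" using bij_betw_same_card[OF bij] .
  then have c1: "2 * card S = card T + card E"
    using fS fE disj by (simp add: card_cartesian_product card_Un_disjoint)
  have c2: "card S = card T + (if u \<in> x then 1 else 0)"
  proof (cases "u \<in> x")
    case True
    have "S = insert u T" using True by (auto simp: S_def T_def)
    moreover have "u \<notin> T" by (auto simp: T_def)
    ultimately show ?thesis using fS True by simp
  next
    case False
    have "S = T" using False by (auto simp: S_def T_def)
    then show ?thesis using False by simp
  qed
  have c3: "card S = card {w. u @ w \<in> x}"
  proof -
    have "S = (\<lambda>w. u @ w) ` {w. u @ w \<in> x}" by (auto simp: S_def)
    moreover have "inj_on (\<lambda>w. u @ w) {w. u @ w \<in> x}" by (auto simp: inj_on_def)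
    ultimately show ?thesis by (simp add: card_image)
  qed
  show ?thesis using c1 c2 c3 unfolding E_def by simp
qed

lemma card_Q:
  assumes tr: "is_tree x"
  shows "card {v \<in> ext_boundary x. \<exists>z. u = v @ z} \<le> 1"
proof -
  have "\<forall>v1\<in>{v \<in> ext_boundary x. \<exists>z. u = v @ z}. \<forall>v2\<in>{v \<in> ext_boundary x. \<exists>z. u = v @ z}. v1 = v2"
  proof (intro ballI)
    have key: "v1 = v2" if h: "v1 \<in> ext_boundary x" "v2 \<in> ext_boundary x" "u = v1 @ z1" "u = v2 @ z2"
       "length v2 \<le> length v1" for v1 v2 z1 z2
    proof (rule ccontr)
      assume ne: "v1 \<noteq> v2"
      have "v1 = v2 @ drop (length v2) v1" using h
        by (metis append_eq_append_conv_if append_take_drop_id)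
      then obtain d where d: "v1 = v2 @ d" "d \<noteq> []" using ne by (metis append.right_neutral)
      obtain w b where w: "w \<in> x" "v1 = w @ [b]" using h(1) unfolding ext_boundary_def by blast
      obtain d' b' where "d = d' @ [b']" using d(2) by (metis rev_exhaust)
      then have "w = v2 @ d'" using d w by simp
      then have "v2 \<in> x" using tree_prefix[OF tr] w by blast
      then show False using h(2) by (simp add: ext_boundary_def)
    qed
    fix v1 v2 assume "v1 \<in> {v \<in> ext_boundary x. \<exists>z. u = v @ z}" "v2 \<in> {v \<in> ext_boundary x. \<exists>z. u = v @ z}"
    then obtain z1 z2 where "v1 \<in> ext_boundary x" "v2 \<in> ext_boundary x" "u = v1 @ z1" "u = v2 @ z2" by blast
    then show "v1 = v2" using key[of v1 v2 z1 z2] key[of v2 v1 z2 z1] nat_le_linear by metis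
  qed
  then show ?thesis using card_le_Suc0_iff_eq finite_bd tr
    by (metis (no_types, lifting) One_nat_def card_le_Suc0_iff_eq finite_subset is_tree_def mem_Collect_eq subsetI)
qed


lemma sa_Vinf: "sigma_algebra UNIV (sets Vinf_space)"
  using sets.sigma_algebra_axioms[of Vinf_space] by simp

lemma sets_mu[simp]: "sets (mu_tree x) = sets Vinf_space"
proof -
  have "sets Vinf_space \<subseteq> Pow UNIV" by simp
  then have "sets (mu_tree x) = sigma_sets UNIV (sets Vinf_space)"
    unfolding mu_tree_def by (rule sets_measure_of)
  also have "\<dots> = sets Vinf_space" by (rule sigma_algebra.sigma_sets_eq[OF sa_Vinf])
  finally show ?thesis .
qed
lemma space_mu[simp]: "space (mu_tree x) = UNIV"
  using sets_eq_imp_space_eq[OF sets_mu[of x]] by simp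

lemma emeasure_mu:
  assumes A: "A \<in> sets Vinf_space"
  shows "emeasure (mu_tree x) A =
     ennreal (1 / (real (card x) + 1)) * (\<Sum>v\<in>ext_boundary x. emeasure (unif_cyl v) A)"
  unfolding mu_tree_def
proof (rule emeasure_measure_of_sigma[OF sa_Vinf _ _ A])
  show "positive (sets Vinf_space)
     (\<lambda>A. ennreal (1 / (real (card x) + 1)) * (\<Sum>v\<in>ext_boundary x. emeasure (unif_cyl v) A))"
    by (simp add: positive_def)
  show "countably_additive (sets Vinf_space)
     (\<lambda>A. ennreal (1 / (real (card x) + 1)) * (\<Sum>v\<in>ext_boundary x. emeasure (unif_cyl v) A))"
  proof (rule countably_additiveI)
    fix B :: "nat \<Rightarrow> iword set"
    assume B: "range B \<subseteq> sets Vinf_space" "disjoint_family B"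
    have "(\<Sum>i. ennreal (1 / (real (card x) + 1)) * (\<Sum>v\<in>ext_boundary x. emeasure (unif_cyl v) (B i)))
       = ennreal (1 / (real (card x) + 1)) * (\<Sum>i. \<Sum>v\<in>ext_boundary x. emeasure (unif_cyl v) (B i))"
      by (rule ennreal_suminf_cmult)
    also have "(\<Sum>i. \<Sum>v\<in>ext_boundary x. emeasure (unif_cyl v) (B i))
       = (\<Sum>v\<in>ext_boundary x. \<Sum>i. emeasure (unif_cyl v) (B i))"
      by (rule suminf_sum) (rule summableI)
    also have "\<dots> = (\<Sum>v\<in>ext_boundary x. emeasure (unif_cyl v) (\<Union>i. B i))"
    proof (rule sum.cong[OF refl])
      fix v
      have "range B \<subseteq> sets (unif_cyl v)" using B(1) by simp
      then show "(\<Sum>i. emeasure (unif_cyl v) (B i)) = emeasure (unif_cyl v) (\<Union>i. B i)"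
        by (rule suminf_emeasure[OF _ B(2)])
    qed
    finally show "(\<Sum>i. ennreal (1 / (real (card x) + 1)) * (\<Sum>v\<in>ext_boundary x. emeasure (unif_cyl v) (B i)))
       = ennreal (1 / (real (card x) + 1)) * (\<Sum>v\<in>ext_boundary x. emeasure (unif_cyl v) (\<Union>i. B i))" .
  qed
qed

lemma unif_fin: "finite_measure (unif_cyl v)"
  by (rule prob_space.finite_measure[OF unif_prob])

lemma emeasure_mu_real:
  assumes A: "A \<in> sets Vinf_space"
  shows "emeasure (mu_tree x) A =
     ennreal ((1 / (real (card x) + 1)) * (\<Sum>v\<in>ext_boundary x. measure (unif_cyl v) A))"
proof -
  have "(\<Sum>v\<in>ext_boundary x. emeasure (unif_cyl v) A) = (\<Sum>v\<in>ext_boundary x. ennreal (measure (unif_cyl v) A))"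
    by (intro sum.cong refl finite_measure.emeasure_eq_measure[OF unif_fin])
  also have "\<dots> = ennreal (\<Sum>v\<in>ext_boundary x. measure (unif_cyl v) A)"
    by (rule sum_ennreal) simp
  finally show ?thesis
    using emeasure_mu[OF A, of x] ennreal_mult[of "1 / (real (card x) + 1)" "\<Sum>v\<in>ext_boundary x. measure (unif_cyl v) A"]
    by (simp add: sum_nonneg)
qed

lemma measure_mu:
  assumes A: "A \<in> sets Vinf_space"
  shows "measure (mu_tree x) A =
     (1 / (real (card x) + 1)) * (\<Sum>v\<in>ext_boundary x. measure (unif_cyl v) A)"
  unfolding measure_def emeasure_mu_real[OF A] by (simp add: sum_nonneg)

lemma card_bd: "is_tree x \<Longrightarrow> card (ext_boundary x) \<le> card x + 1"
proof -
  assume tr: "is_tree x"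
  have "ext_boundary x = {v \<in> ext_boundary x. \<exists>z. v = [] @ z \<and> z \<noteq> []}"
    by (auto simp: ext_boundary_def)
  then have "card (ext_boundary x) = card {w. [] @ w \<in> x} + (if [] \<in> x then 1 else 0)"
    using count_E[OF tr, of "[]"] by simp
  then show ?thesis by simp
qed

lemma emeasure_mu_space: "is_tree x \<Longrightarrow> emeasure (mu_tree x) (space (mu_tree x)) \<le> 1"
proof -
  assume tr: "is_tree x"
  have "(\<Sum>v\<in>ext_boundary x. measure (unif_cyl v) UNIV) \<le> (\<Sum>v\<in>ext_boundary x. 1)"
    by (intro sum_mono) (rule prob_space.prob_le_1[OF unif_prob])
  also have "\<dots> \<le> real (card x) + 1" using card_bd[OF tr] by simp
  finally have le: "(1 / (real (card x) + 1)) * (\<Sum>v\<in>ext_boundary x. measure (unif_cyl v) UNIV) \<le> 1"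
    by (simp add: divide_le_eq)
  have e: "emeasure (mu_tree x) (space (mu_tree x)) = ennreal ((1 / (real (card x) + 1)) * (\<Sum>v\<in>ext_boundary x. measure (unif_cyl v) UNIV))"
    using emeasure_mu_real[of UNIV x] sets.top[of Vinf_space] by (simp only: space_mu space_Vinf)
  have "ennreal ((1 / (real (card x) + 1)) * (\<Sum>v\<in>ext_boundary x. measure (unif_cyl v) UNIV)) \<le> 1"
    using ennreal_leI[OF le] by (simp only: ennreal_1)
  then show ?thesis by (simp only: e)
qed

lemma finite_mu: "is_tree x \<Longrightarrow> finite_measure (mu_tree x)"
proof (rule finite_measureI)
  assume "is_tree x"
  then have "emeasure (mu_tree x) (space (mu_tree x)) \<le> 1" by (rule emeasure_mu_space)
  then show "emeasure (mu_tree x) (space (mu_tree x)) \<noteq> \<infinity>"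
    by (auto simp: top_unique)
qed


lemma arith_bound:
  fixes m s N :: real
  assumes "0 \<le> s" "s \<le> N" "s \<le> m" "m \<le> s + 2"
  shows "\<bar>m / (N + 1) - s / N\<bar> \<le> 2 / (N + 1)"
proof (cases "N = 0")
  case True
  then show ?thesis using assms by simp
next
  case False
  then have N: "N > 0" using assms by simp
  have e: "m / (N + 1) - s / N = ((m - s) * N - s) / (N * (N + 1))"
    using N by (simp add: field_simps)
  have a: "(m - s) * N \<le> 2 * N" by (rule mult_right_mono) (use assms N in auto)
  have b: "0 \<le> (m - s) * N" using assms N by simp
  have "\<bar>(m - s) * N - s\<bar> \<le> 2 * N" using a b assms by linarith
  then have "\<bar>(m - s) * N - s\<bar> / (N * (N + 1)) \<le> 2 * N / (N * (N + 1))"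
    using N by (intro divide_right_mono) auto
  then have "\<bar>((m - s) * N - s) / (N * (N + 1))\<bar> \<le> 2 * N / (N * (N + 1))"
    using N by (simp add: abs_divide)
  also have "\<dots> = 2 / (N + 1)" using N by simp
  finally show ?thesis using e by simp
qed

lemma mu_t_bound:
  assumes tr: "is_tree x"
  shows "\<bar>measure (mu_tree x) (cylinder u) - subtree_size x u\<bar> \<le> 2 / (real (card x) + 1)"
proof -
  define B where "B = ext_boundary x"
  define E where "E = {v \<in> B. \<exists>z. v = u @ z \<and> z \<noteq> []}"
  define Q where "Q = {v \<in> B. \<exists>z. u = v @ z}"
  define R where "R = B - E - Q"
  define P where "P v = measure (unif_cyl v) (cylinder u)" for v
  have fx: "finite x" using tr by (simp add: is_tree_def)
  have fB: "finite B" unfolding B_def by (rule finite_bd[OF fx])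
  have fin: "finite E" "finite Q" "finite R" using fB by (auto simp: E_def Q_def R_def)
  have disj: "E \<inter> Q = {}"
    by (auto simp: E_def Q_def)
  have Bsplit: "B = E \<union> Q \<union> R" by (auto simp: E_def Q_def R_def)
  have "(\<Sum>v\<in>B. P v) = (\<Sum>v\<in>E. P v) + (\<Sum>v\<in>Q. P v) + (\<Sum>v\<in>R. P v)"
  proof -
    have d2: "(E \<union> Q) \<inter> R = {}" by (auto simp: R_def)
    have "(\<Sum>v\<in>B. P v) = (\<Sum>v\<in>E \<union> Q. P v) + (\<Sum>v\<in>R. P v)"
      unfolding Bsplit using fin d2 by (simp add: sum.union_disjoint)
    also have "(\<Sum>v\<in>E \<union> Q. P v) = (\<Sum>v\<in>E. P v) + (\<Sum>v\<in>Q. P v)"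
      using fin disj by (simp add: sum.union_disjoint)
    finally show ?thesis .
  qed
  moreover have "(\<Sum>v\<in>E. P v) = real (card E)"
  proof -
    have "(\<Sum>v\<in>E. P v) = (\<Sum>v\<in>E. 1)"
    proof (rule sum.cong[OF refl])
      fix v assume "v \<in> E"
      then obtain z where "v = u @ z" by (auto simp: E_def)
      then show "P v = 1" unfolding P_def by (rule unif_cyl_prefix)
    qed
    then show ?thesis by simp
  qed
  moreover have "(\<Sum>v\<in>R. P v) = 0"
  proof (rule sum.neutral, rule ballI)
    fix v assume "v \<in> R"
    then have "\<not> (\<exists>z. v = u @ z)" "\<not> (\<exists>z. u = v @ z)"
      by (auto simp: R_def E_def Q_def B_def)
    then show "P v = 0" unfolding P_def by (rule unif_cyl_incomp)
  qed
  moreover have "0 \<le> (\<Sum>v\<in>Q. P v)" by (simp add: P_def sum_nonneg)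
  moreover have "(\<Sum>v\<in>Q. P v) \<le> 1"
  proof -
    have "(\<Sum>v\<in>Q. P v) \<le> (\<Sum>v\<in>Q. 1)" by (intro sum_mono) (simp add: P_def unif_cyl_le1)
    also have "\<dots> \<le> 1" using card_Q[OF tr, of u] by (simp add: Q_def B_def)
    finally show ?thesis .
  qed
  moreover have cE: "card E = card {w. u @ w \<in> x} + (if u \<in> x then 1 else 0)"
    unfolding E_def B_def by (rule count_E[OF tr])
  moreover have sN: "card {w. u @ w \<in> x} \<le> card x"
  proof -
    have "(\<lambda>w. u @ w) ` {w. u @ w \<in> x} \<subseteq> x" by auto
    moreover have "inj_on (\<lambda>w. u @ w) {w. u @ w \<in> x}" by (auto simp: inj_on_def)
    ultimately show ?thesis using fx by (metis card_image card_mono)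
  qed
  moreover have "real (card {w. u @ w \<in> x}) \<le> real (card E)" "real (card E) \<le> real (card {w. u @ w \<in> x}) + 1"
    using cE by auto
  ultimately have m1: "real (card {w. u @ w \<in> x}) \<le> (\<Sum>v\<in>B. P v)"
     and m2: "(\<Sum>v\<in>B. P v) \<le> real (card {w. u @ w \<in> x}) + 2"
    by linarith+
  have "measure (mu_tree x) (cylinder u) = (\<Sum>v\<in>B. P v) / (real (card x) + 1)"
    using measure_mu[OF cylinder_sets, of x u] by (simp add: B_def P_def)
  moreover have "subtree_size x u = real (card {w. u @ w \<in> x}) / real (card x)"
    by (simp add: subtree_size_def)
  ultimately show ?thesis
    using arith_bound[OF _ _ m1 m2, of "real (card x)"] sN by (simp only: of_nat_0_le_iff of_nat_le_iff)
qed


lemma dist_agree: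
  assumes "dist_inf v w < 2 powr - real k" "i < k"
  shows "v i = w i"
proof (cases "v = w")
  case True then show ?thesis by simp
next
  case False
  then have "2 powr - real (LEAST n. v n \<noteq> w n) < 2 powr - real k"
    using assms(1) by (simp add: dist_inf_def)
  then have "- real (LEAST n. v n \<noteq> w n) < - real k"
    using powr_less_cancel_iff[of "2::real"] by simp
  then have "k < (LEAST n. v n \<noteq> w n)" by simp
  then have "i < (LEAST n. v n \<noteq> w n)" using assms(2) by simp
  then show ?thesis using not_less_Least by blast
qed

lemma dist_small:
  assumes "\<forall>i<k. v i = w i"
  shows "dist_inf v w \<le> 2 powr - real k"
proof (cases "v = w")
  case True then show ?thesis by (simp add: dist_inf_def)
next
  case False
  then obtain n where "v n \<noteq> w n" by auto
  then have "v (LEAST n. v n \<noteq> w n) \<noteq> w (LEAST n. v n \<noteq> w n)" by (rule LeastI)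
  then have "k \<le> (LEAST n. v n \<noteq> w n)" using assms not_le by blast
  then have "2 powr - real (LEAST n. v n \<noteq> w n) \<le> (2::real) powr - real k"
    by (intro powr_mono) auto
  then show ?thesis using False by (simp add: dist_inf_def)
qed

lemma indicator_cont: "continuous_Vinf (indicator (cylinder u))"
  unfolding continuous_Vinf_def
proof (intro allI impI)
  fix v :: iword and e :: real assume e: "e > 0"
  show "\<exists>\<delta>>0. \<forall>w. dist_inf v w < \<delta> \<longrightarrow> \<bar>indicator (cylinder u) w - indicator (cylinder u) v\<bar> < e"
  proof (intro exI[of _ "2 powr - real (length u)"] conjI allI impI)
    show "0 < (2::real) powr - real (length u)" by simp
    fix w assume "dist_inf v w < 2 powr - real (length u)"
    then have "\<forall>i<length u. v i = w i" using dist_agree by blast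
    then have "(w \<in> cylinder u) = (v \<in> cylinder u)" by (auto simp: cylinder_def)
    then show "\<bar>indicator (cylinder u) w - indicator (cylinder u) v\<bar> < (e::real)"
      using e by (simp add: indicator_def)
  qed
qed

lemma weak_cyl:
  assumes "prob_measure_Vinf \<mu>" "weak_conv_Vinf M \<mu>" "\<And>n. sets (M n) = sets Vinf_space"
  shows "(\<lambda>n. measure (M n) (cylinder u)) \<longlonglongrightarrow> measure \<mu> (cylinder u)"
proof -
  have "(\<lambda>n. integral\<^sup>L (M n) (indicator (cylinder u))) \<longlonglongrightarrow> integral\<^sup>L \<mu> (indicator (cylinder u) :: iword \<Rightarrow> real)"
  proof -
    have "\<exists>B. \<forall>v. \<bar>(indicator (cylinder u) v :: real)\<bar> \<le> B"
      by (rule exI[of _ 1]) (simp add: indicator_def)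
    then show ?thesis using assms(2) indicator_cont unfolding weak_conv_Vinf_def by blast
  qed
  moreover have "space (M n) = UNIV" for n using sets_eq_imp_space_eq[OF assms(3)[of n]] by simp
  moreover have "space \<mu> = UNIV" using assms(1) sets_eq_imp_space_eq[of \<mu> Vinf_space]
    by (simp add: prob_measure_Vinf_def)
  ultimately show ?thesis by (simp add: integral_indicator)
qed

lemma inv_card_0:
  assumes "filterlim (\<lambda>n. card (x n)) at_top sequentially"
  shows "(\<lambda>n. 2 / (real (card (x n)) + 1)) \<longlonglongrightarrow> 0"
proof -
  have "filterlim (\<lambda>n. real (card (x n))) at_top sequentially"
    by (rule filterlim_compose[OF filterlim_real_sequentially assms])
  then have "filterlim (\<lambda>n. 1 + real (card (x n))) at_top sequentially"
    by (rule filterlim_tendsto_add_at_top[OF tendsto_const])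
  then have "filterlim (\<lambda>n. 1 + real (card (x n))) at_infinity sequentially"
    by (rule filterlim_mono[OF _ at_top_le_at_infinity order.refl])
  then have "(\<lambda>n. 2 / (1 + real (card (x n)))) \<longlonglongrightarrow> 0" by (rule tendsto_divide_0[OF tendsto_const])
  then show ?thesis by (simp add: add.commute)
qed

lemma diff_0:
  assumes trees: "\<And>n. is_tree (x n)"
    and size_inf: "filterlim (\<lambda>n. card (x n)) at_top sequentially"
  shows "(\<lambda>n. measure (mu_tree (x n)) (cylinder u) - subtree_size (x n) u) \<longlonglongrightarrow> 0"
proof (rule Lim_null_comparison[OF _ inv_card_0[OF size_inf]])
  show "\<forall>\<^sub>F n in sequentially. norm (measure (mu_tree (x n)) (cylinder u) - subtree_size (x n) u) \<le> 2 / (real (card (x n)) + 1)"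
    by (intro always_eventually allI) (simp only: real_norm_def mu_t_bound[OF trees])
qed


definition aF :: "(word \<Rightarrow> real) \<Rightarrow> word \<Rightarrow> real" where
  "aF F u = (\<Sum>i<length u. if u ! i then F (take i u @ [False]) else 0)"

lemma aF_snoc: "aF F (u @ [b]) = aF F u + (if b then F (u @ [False]) else 0)"
proof -
  have "aF F (u @ [b]) = (\<Sum>i<Suc (length u). if (u @ [b]) ! i then F (take i (u @ [b]) @ [False]) else 0)"
    by (simp add: aF_def)
  also have "\<dots> = (\<Sum>i<length u. if (u @ [b]) ! i then F (take i (u @ [b]) @ [False]) else 0)
       + (if b then F (u @ [False]) else 0)"
    by (simp add: nth_append)
  also have "(\<Sum>i<length u. if (u @ [b]) ! i then F (take i (u @ [b]) @ [False]) else 0) = aF F u"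
    unfolding aF_def by (intro sum.cong refl) (simp add: nth_append)
  finally show ?thesis .
qed

lemma aF_nil[simp]: "aF F [] = 0" by (simp add: aF_def)

definition IvF :: "(word \<Rightarrow> real) \<Rightarrow> word \<Rightarrow> real set" where
  "IvF F u = {aF F u ..< aF F u + F u}"

primrec pthF :: "(word \<Rightarrow> real) \<Rightarrow> nat \<Rightarrow> real \<Rightarrow> word" where
  "pthF F 0 \<omega> = []"
| "pthF F (Suc k) \<omega> = pthF F k \<omega> @ [aF F (pthF F k \<omega>) + F (pthF F k \<omega> @ [False]) \<le> \<omega>]"

definition phiF :: "(word \<Rightarrow> real) \<Rightarrow> real \<Rightarrow> iword" where
  "phiF F \<omega> i = pthF F (Suc i) \<omega> ! i"

lemma length_pth[simp]: "length (pthF F k \<omega>) = k"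
  by (induction k) auto

lemma pth_take: "k \<le> m \<Longrightarrow> take k (pthF F m \<omega>) = pthF F k \<omega>"
proof (induction m)
  case 0 then show ?case by simp
next
  case (Suc m)
  show ?case
  proof (cases "k = Suc m")
    case True then show ?thesis by simp
  next
    case False
    then have "k \<le> m" using Suc by simp
    then show ?thesis using Suc by simp
  qed
qed

lemma phi_cyl: "(phiF F \<omega> \<in> cylinder u) = (pthF F (length u) \<omega> = u)"
proof -
  have nth: "pthF F (length u) \<omega> ! i = phiF F \<omega> i" if "i < length u" for i
  proof -
    have "pthF F (Suc i) \<omega> = take (Suc i) (pthF F (length u) \<omega>)"
      using pth_take[of "Suc i" "length u" F \<omega>] that by simp
    then show ?thesis unfolding phiF_def using that by simp
  qed
  show ?thesis
    unfolding cylinder_def using nth by (auto simp: list_eq_iff_nth_eq)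
qed

context
  fixes F :: "word \<Rightarrow> real"
  assumes F0: "F [] = 1"
    and Fadd: "\<And>u. F u = F (u @ [False]) + F (u @ [True])"
    and Fnn: "\<And>u. F u \<ge> 0"
begin

lemma Iv_sub: "IvF F (u @ [b]) \<subseteq> IvF F u"
  using Fadd[of u] Fnn[of "u @ [False]"] Fnn[of "u @ [True]"]
  by (cases b) (auto simp: IvF_def aF_snoc)

lemma Iv_top: "IvF F u \<subseteq> {0..<1}"
proof (induction u rule: rev_induct)
  case Nil then show ?case by (simp add: IvF_def F0)
next
  case (snoc b u) then show ?case using Iv_sub by blast
qed

lemma pth_in: "\<omega> \<in> {0..<1} \<Longrightarrow> \<omega> \<in> IvF F (pthF F k \<omega>)"
proof (induction k)
  case 0 then show ?case by (simp add: IvF_def F0)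
next
  case (Suc k)
  define p where "p = pthF F k \<omega>"
  have "\<omega> \<in> IvF F p" using Suc by (simp add: p_def)
  then show ?case
    using Fadd[of p] unfolding p_def[symmetric] by (auto simp: IvF_def aF_snoc p_def[symmetric])
qed

lemma pth_eq: "\<omega> \<in> IvF F u \<Longrightarrow> pthF F (length u) \<omega> = u"
proof (induction u rule: rev_induct)
  case Nil then show ?case by simp
next
  case (snoc b u)
  then have IH: "pthF F (length u) \<omega> = u" using Iv_sub by blast
  have "\<omega> \<in> IvF F (u @ [b])" by fact
  then have "(aF F u + F (u @ [False]) \<le> \<omega>) = b"
    using Fnn[of "u @ [True]"] by (cases b) (auto simp: IvF_def aF_snoc)
  then show ?case using IH by simp
qed

lemma pre_cyl: "{0..<1} \<inter> phiF F -` cylinder u = IvF F u"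
proof
  show "{0..<1} \<inter> phiF F -` cylinder u \<subseteq> IvF F u"
  proof
    fix \<omega> assume "\<omega> \<in> {0..<1} \<inter> phiF F -` cylinder u"
    then have "\<omega> \<in> {0..<1}" "pthF F (length u) \<omega> = u" by (auto simp: phi_cyl)
    then show "\<omega> \<in> IvF F u" using pth_in by metis
  qed
  show "IvF F u \<subseteq> {0..<1} \<inter> phiF F -` cylinder u"
  proof
    fix \<omega> assume "\<omega> \<in> IvF F u"
    then show "\<omega> \<in> {0..<1} \<inter> phiF F -` cylinder u"
      using Iv_top[of u] pth_eq[of \<omega> u] by (auto simp: phi_cyl)
  qed
qed

end

lemma pth_meas: "(\<lambda>\<omega>. pthF F k \<omega>) \<in> borel \<rightarrow>\<^sub>M count_space UNIV"
proof (induction k)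
  case 0 then show ?case by simp
next
  case (Suc k)
  have "(\<lambda>\<omega>. (\<lambda>l \<omega>. l @ [aF F l + F (l @ [False]) \<le> \<omega>]) (pthF F k \<omega>) \<omega>) \<in> borel \<rightarrow>\<^sub>M count_space UNIV"
  proof (rule measurable_compose_countable[OF _ Suc])
    fix l :: word
    have "(\<lambda>\<omega>::real. aF F l + F (l @ [False]) \<le> \<omega>) \<in> borel \<rightarrow>\<^sub>M count_space UNIV"
      by measurable
    then show "(\<lambda>\<omega>::real. l @ [aF F l + F (l @ [False]) \<le> \<omega>]) \<in> borel \<rightarrow>\<^sub>M count_space UNIV"
      by (rule measurable_compose) simp
  qed
  then show ?case by simp
qed

lemma phi_meas: "phiF F \<in> borel \<rightarrow>\<^sub>M Vinf_space"
  unfolding Vinf_space_def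
proof (rule measurable_PiM_single'[where f="\<lambda>i \<omega>. phiF F \<omega> i", simplified])
  fix i
  show "(\<lambda>\<omega>. phiF F \<omega> i) \<in> borel \<rightarrow>\<^sub>M count_space UNIV"
    unfolding phiF_def by (rule measurable_compose[OF pth_meas]) simp
qed (simp add: space_PiM)

lemma construct:
  assumes F0: "F [] = 1"
    and Fadd: "\<And>u. F u = F (u @ [False]) + F (u @ [True])"
    and Fnn: "\<And>u. F u \<ge> 0"
  shows "\<exists>\<mu>. prob_measure_Vinf \<mu> \<and> (\<forall>u. measure \<mu> (cylinder u) = F u)"
proof -
  define U where "U = uniform_measure lborel {0..<(1::real)}"
  have U1: "prob_space U" unfolding U_def by (rule prob_space_uniform_measure) auto
  have sU: "sets U = sets borel" unfolding U_def by simp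
  have spU: "space U = UNIV" using sets_eq_imp_space_eq[OF sU] by simp
  have Um: "phiF F \<in> U \<rightarrow>\<^sub>M Vinf_space"
    unfolding measurable_cong_sets[OF sU refl] by (rule phi_meas)
  define \<mu> where "\<mu> = distr U Vinf_space (phiF F)"
  have "prob_space \<mu>" unfolding \<mu>_def by (rule prob_space.prob_space_distr[OF U1 Um])
  moreover have "sets \<mu> = sets Vinf_space" by (simp add: \<mu>_def)
  moreover have "measure \<mu> (cylinder u) = F u" for u
  proof -
    have pm: "phiF F -` cylinder u \<inter> space borel \<in> sets borel"
      by (rule measurable_sets[OF phi_meas cylinder_sets])
    have "emeasure \<mu> (cylinder u) = emeasure U (phiF F -` cylinder u \<inter> space U)"
      unfolding \<mu>_def by (rule emeasure_distr[OF Um cylinder_sets])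
    also have "\<dots> = emeasure U (phiF F -` cylinder u)" by (simp only: spU Int_UNIV_right)
    also have "\<dots> = emeasure lborel ({0..<1} \<inter> phiF F -` cylinder u) / emeasure lborel {0..<(1::real)}"
      unfolding U_def by (rule emeasure_uniform_measure) (use pm in auto)
    also have "\<dots> = emeasure lborel (IvF F u) / 1"
      using pre_cyl[OF F0 Fadd Fnn, of u] by simp
    also have "\<dots> = ennreal (F u)"
      unfolding IvF_def using Fnn[of u] by (simp add: divide_ennreal_def)
    finally show ?thesis using Fnn[of u] by (simp add: measure_def)
  qed
  ultimately show ?thesis unfolding prob_measure_Vinf_def by blast
qed


definition pre :: "iword \<Rightarrow> nat \<Rightarrow> word" where "pre v k = map v [0..<k]"
definition ext :: "word \<Rightarrow> iword" where "ext u = (\<lambda>i. if i < length u then u ! i else False)"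
definition good :: "(iword \<Rightarrow> real) \<Rightarrow> real \<Rightarrow> word \<Rightarrow> bool" where
  "good f e u \<longleftrightarrow> (\<forall>v w. v \<in> cylinder u \<longrightarrow> w \<in> cylinder u \<longrightarrow> \<bar>f v - f w\<bar> < e)"

lemma in_cyl_pre: "v \<in> cylinder (pre v k)" by (simp add: cylinder_def pre_def)
lemma in_cyl_ext: "ext u \<in> cylinder u" by (simp add: cylinder_def ext_def)
lemma cyl_app: "cylinder (u @ w) \<subseteq> cylinder u" by (auto simp: cylinder_def nth_append)
lemma good_app: "good f e u \<Longrightarrow> good f e (u @ w)"
  using cyl_app unfolding good_def by blast
lemma length_pre[simp]: "length (pre v k) = k" by (simp add: pre_def)

lemma cyl_pre_iff: "length u = k \<Longrightarrow> (v \<in> cylinder u) = (u = pre v k)"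
  by (auto simp: cylinder_def pre_def list_eq_iff_nth_eq)

lemma good_local:
  assumes c: "continuous_Vinf f" and e: "e > 0"
  shows "\<exists>k. good f e (pre v k)"
proof -
  obtain d where d: "d > 0" "\<And>w. dist_inf v w < d \<Longrightarrow> \<bar>f w - f v\<bar> < e / 2"
    using c e unfolding continuous_Vinf_def by (meson half_gt_zero)
  obtain k where k: "1 / d < 2 ^ k" using real_arch_pow[of "2::real" "1 / d"] by auto
  have "(2::real) powr - real k = 1 / 2 ^ k" by (simp add: powr_minus powr_realpow divide_inverse)
  also have "\<dots> < d" using k d by (simp add: field_simps)
  finally have kd: "(2::real) powr - real k < d" .
  have "\<bar>f w - f v\<bar> < e / 2" if "w \<in> cylinder (pre v k)" for w
  proof -
    have "\<forall>i<k. v i = w i" using that by (simp add: cylinder_def pre_def)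
    then have "dist_inf v w \<le> 2 powr - real k" by (rule dist_small)
    then show ?thesis using kd d(2) by simp
  qed
  then have "good f e (pre v k)" unfolding good_def
    by (smt (verit, best) field_sum_of_halves)
  then show ?thesis by blast
qed

definition Inf_good :: "(iword \<Rightarrow> real) \<Rightarrow> real \<Rightarrow> word \<Rightarrow> bool" where
  "Inf_good f e u \<longleftrightarrow> (\<forall>k. \<exists>w. length w = k \<and> \<not> good f e (u @ w))"

lemma Inf_step:
  assumes "Inf_good f e u"
  shows "Inf_good f e (u @ [False]) \<or> Inf_good f e (u @ [True])"
proof (rule ccontr)
  assume "\<not> ?thesis"
  then obtain k0 k1 where k0: "\<And>w. length w = k0 \<Longrightarrow> good f e (u @ [False] @ w)"
    and k1: "\<And>w. length w = k1 \<Longrightarrow> good f e (u @ [True] @ w)"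
    unfolding Inf_good_def by auto
  obtain w where w: "length w = Suc (max k0 k1)" "\<not> good f e (u @ w)"
    using assms unfolding Inf_good_def by blast
  then obtain b w' where bw: "w = b # w'" "length w' = max k0 k1" by (cases w) auto
  show False
  proof (cases b)
    case True
    have "good f e (u @ [True] @ take k1 w' @ drop k1 w')"
      using good_app k1[of "take k1 w'"] bw by (metis append.assoc length_take min.absorb2 max.cobounded2)
    then show False using w bw True by simp
  next
    case False
    have "good f e (u @ [False] @ take k0 w' @ drop k0 w')"
      using good_app k0[of "take k0 w'"] bw by (metis append.assoc length_take min.absorb2 max.cobounded1)
    then show False using w bw False by simp
  qed
qed

primrec kpath :: "(iword \<Rightarrow> real) \<Rightarrow> real \<Rightarrow> nat \<Rightarrow> word" where
  "kpath f e 0 = []"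
| "kpath f e (Suc n) = kpath f e n @ [\<not> Inf_good f e (kpath f e n @ [False])]"

lemma length_kpath[simp]: "length (kpath f e k) = k" by (induction k) auto

lemma kpath_take: "k \<le> m \<Longrightarrow> take k (kpath f e m) = kpath f e k"
proof (induction m)
  case 0 then show ?case by simp
next
  case (Suc m)
  show ?case
  proof (cases "k = Suc m")
    case True then show ?thesis by simp
  next
    case False
    then have "k \<le> m" using Suc by simp
    then show ?thesis using Suc by simp
  qed
qed

lemma kpath_Inf: "Inf_good f e [] \<Longrightarrow> Inf_good f e (kpath f e n)"
proof (induction n)
  case 0 then show ?case by simp
next
  case (Suc n)
  then have "Inf_good f e (kpath f e n)" by simp
  from Inf_step[OF this] show ?case
    by (cases "Inf_good f e (kpath f e n @ [False])") auto
qed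

lemma unif_cont:
  assumes c: "continuous_Vinf f" and e: "e > 0"
  shows "\<exists>k. \<forall>u. length u = k \<longrightarrow> good f e u"
proof (rule ccontr)
  assume H: "\<not> ?thesis"
  have I0: "Inf_good f e []" unfolding Inf_good_def using H by auto
  define \<omega> where "\<omega> i = kpath f e (Suc i) ! i" for i
  have pw: "pre \<omega> k = kpath f e k" for k
  proof (rule nth_equalityI)
    show "length (pre \<omega> k) = length (kpath f e k)" by simp
    fix i assume "i < length (pre \<omega> k)"
    then have i: "i < k" by simp
    have "kpath f e (Suc i) = take (Suc i) (kpath f e k)" using kpath_take[of "Suc i" k f e] i by simp
    then show "pre \<omega> k ! i = kpath f e k ! i" using i by (simp add: pre_def \<omega>_def)
  qed
  obtain k where "good f e (pre \<omega> k)" using good_local[OF c e] by blast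
  moreover have "Inf_good f e (pre \<omega> k)" using kpath_Inf[OF I0] pw by simp
  ultimately show False unfolding Inf_good_def by (metis append.right_neutral length_0_conv)
qed

definition W :: "nat \<Rightarrow> word set" where "W k = {u. length u = k}"

lemma finite_W: "finite (W k)"
proof -
  have "W k = {xs. set xs \<subseteq> UNIV \<and> length xs = k}" by (simp add: W_def)
  then show ?thesis using finite_lists_length_eq[of "UNIV :: bool set" k] by simp
qed

definition fk :: "(iword \<Rightarrow> real) \<Rightarrow> nat \<Rightarrow> iword \<Rightarrow> real" where
  "fk f k v = (\<Sum>u\<in>W k. f (ext u) * indicator (cylinder u) v)"

lemma fk_eq: "fk f k v = f (ext (pre v k))"
proof -
  have "fk f k v = (\<Sum>u\<in>W k. if u = pre v k then f (ext u) else 0)"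
    unfolding fk_def by (intro sum.cong refl) (auto simp: W_def cyl_pre_iff indicator_def)
  also have "\<dots> = f (ext (pre v k))" using finite_W by (simp add: W_def)
  finally show ?thesis .
qed

lemma fk_meas: "fk f k \<in> borel_measurable Vinf_space"
  unfolding fk_def by measurable

lemma approx:
  assumes c: "continuous_Vinf f" and e: "e > 0"
  shows "\<exists>K. \<forall>k\<ge>K. \<forall>v. \<bar>f v - fk f k v\<bar> < e"
proof -
  obtain K where K: "\<And>u. length u = K \<Longrightarrow> good f e u" using unif_cont[OF c e] by blast
  have "\<bar>f v - fk f k v\<bar> < e" if "k \<ge> K" for k v
  proof -
    have "pre v k = take K (pre v k) @ drop K (pre v k)" by simp
    moreover have "good f e (take K (pre v k))" using K that by simp
    ultimately have "good f e (pre v k)" using good_app by metis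
    then show ?thesis unfolding fk_eq good_def using in_cyl_pre in_cyl_ext by blast
  qed
  then show ?thesis by blast
qed

lemma cont_meas:
  assumes c: "continuous_Vinf f"
  shows "f \<in> borel_measurable Vinf_space"
proof (rule borel_measurable_LIMSEQ_real[where u="\<lambda>k. fk f k"])
  fix v
  show "(\<lambda>k. fk f k v) \<longlonglongrightarrow> f v"
  proof (rule LIMSEQ_I)
    fix r :: real assume "r > 0"
    then obtain K where "\<forall>k\<ge>K. \<forall>v. \<bar>f v - fk f k v\<bar> < r" using approx[OF c] by blast
    then show "\<exists>no. \<forall>n\<ge>no. norm (fk f n v - f v) < r" by (auto simp: abs_minus_commute)
  qed
qed (rule fk_meas)


lemma abs3:
  fixes a b s s0 r :: real
  assumes "\<bar>a - s\<bar> \<le> r / 4" "\<bar>b - s0\<bar> \<le> r / 4" "\<bar>s - s0\<bar> < r / 4" "0 < r"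
  shows "\<bar>a - b\<bar> < r"
  using assms unfolding abs_le_iff abs_less_iff by linarith

lemma int_close:
  assumes fN: "finite_measure N" and le1: "measure N (space N) \<le> 1"
    and sN: "sets N = sets Vinf_space"
    and c: "continuous_Vinf f" and B: "\<And>v. \<bar>f v\<bar> \<le> B"
    and cl: "\<And>v. \<bar>f v - fk f k v\<bar> < e" and e: "e > 0"
  shows "\<bar>integral\<^sup>L N f - (\<Sum>u\<in>W k. f (ext u) * measure N (cylinder u))\<bar> \<le> e"
proof -
  have spN: "space N = UNIV" using sets_eq_imp_space_eq[OF sN] by simp
  have fm: "f \<in> borel_measurable N"
    unfolding measurable_cong_sets[OF sN refl] by (rule cont_meas[OF c])
  have gm: "fk f k \<in> borel_measurable N"
    unfolding measurable_cong_sets[OF sN refl] by (rule fk_meas)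
  have intf: "integrable N f"
    by (rule finite_measure.integrable_const_bound[OF fN _ fm, of B]) (simp add: B)
  have intg: "integrable N (fk f k)"
    by (rule finite_measure.integrable_const_bound[OF fN _ gm, of B]) (simp add: B fk_eq)
  have ind: "integrable N (\<lambda>v. f (ext u) * indicator (cylinder u) v)" for u
  proof -
    have cs: "cylinder u \<in> sets N" using sN by simp
    have "emeasure N (cylinder u) < \<infinity>"
      using finite_measure.emeasure_finite[OF fN] by (simp add: top.not_eq_extremum)
    then have "integrable N (indicator (cylinder u) :: iword \<Rightarrow> real)"
      by (rule integrable_real_indicator[OF cs])
    then show ?thesis by (rule integrable_mult_right)
  qed
  have ig: "integral\<^sup>L N (fk f k) = (\<Sum>u\<in>W k. f (ext u) * measure N (cylinder u))"
    unfolding fk_def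
    by (subst Bochner_Integration.integral_sum[OF ind]) (simp add: integral_indicator spN)
  have "\<bar>integral\<^sup>L N f - integral\<^sup>L N (fk f k)\<bar> = \<bar>integral\<^sup>L N (\<lambda>v. f v - fk f k v)\<bar>"
    by (simp add: Bochner_Integration.integral_diff[OF intf intg])
  also have "\<dots> \<le> integral\<^sup>L N (\<lambda>v. \<bar>f v - fk f k v\<bar>)"
    using integral_norm_bound[of N "\<lambda>v. f v - fk f k v"] by simp
  also have "\<dots> \<le> integral\<^sup>L N (\<lambda>v. e)"
  proof (rule integral_mono)
    show "integrable N (\<lambda>v. \<bar>f v - fk f k v\<bar>)" using intf intg by simp
    show "integrable N (\<lambda>v. e)" using fN by (simp add: finite_measure.integrable_const)
    show "\<And>v. v \<in> space N \<Longrightarrow> \<bar>f v - fk f k v\<bar> \<le> e" using cl less_imp_le by blast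
  qed
  also have "\<dots> = measure N (space N) * e" by simp
  also have "\<dots> \<le> e" using le1 e by (simp add: mult_left_le_one_le)
  finally show ?thesis unfolding ig .
qed

lemma weak_from_cyl:
  assumes sM: "\<And>n. sets (M n) = sets Vinf_space" and fM: "\<And>n. finite_measure (M n)"
    and le1: "\<And>n. measure (M n) (space (M n)) \<le> 1"
    and p\<mu>: "prob_measure_Vinf \<mu>"
    and conv: "\<And>u. (\<lambda>n. measure (M n) (cylinder u)) \<longlonglongrightarrow> measure \<mu> (cylinder u)"
  shows "weak_conv_Vinf M \<mu>"
  unfolding weak_conv_Vinf_def
proof (intro allI impI, elim conjE exE)
  fix f :: "iword \<Rightarrow> real" and B
  assume c: "continuous_Vinf f" and B: "\<forall>v. \<bar>f v\<bar> \<le> B"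
  have ps: "prob_space \<mu>" and s\<mu>: "sets \<mu> = sets Vinf_space" using p\<mu> by (auto simp: prob_measure_Vinf_def)
  have f\<mu>: "finite_measure \<mu>" using ps by (rule prob_space.finite_measure)
  have l\<mu>: "measure \<mu> (space \<mu>) \<le> 1" using ps by (simp add: prob_space.prob_space)
  show "(\<lambda>n. integral\<^sup>L (M n) f) \<longlonglongrightarrow> integral\<^sup>L \<mu> f"
  proof (rule LIMSEQ_I)
    fix r :: real assume r: "r > 0"
    define e where "e = r / 4"
    have e: "e > 0" using r by (simp add: e_def)
    obtain K where K: "\<forall>k\<ge>K. \<forall>v. \<bar>f v - fk f k v\<bar> < e" using approx[OF c e] by blast
    have cl: "\<And>v. \<bar>f v - fk f K v\<bar> < e" using K by blast
    define S where "S n = (\<Sum>u\<in>W K. f (ext u) * measure (M n) (cylinder u))" for n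
    define S0 where "S0 = (\<Sum>u\<in>W K. f (ext u) * measure \<mu> (cylinder u))"
    have "S \<longlonglongrightarrow> S0" unfolding S_def S0_def
      by (intro tendsto_sum tendsto_mult tendsto_const conv)
    then obtain N where N: "\<And>n. n \<ge> N \<Longrightarrow> norm (S n - S0) < e" using LIMSEQ_D[OF _ e] by blast
    have a: "\<bar>integral\<^sup>L (M n) f - S n\<bar> \<le> e" for n
      unfolding S_def by (rule int_close[OF fM le1 sM c _ cl e]) (use B in blast)
    have b: "\<bar>integral\<^sup>L \<mu> f - S0\<bar> \<le> e"
      unfolding S0_def by (rule int_close[OF f\<mu> l\<mu> s\<mu> c _ cl e]) (use B in blast)
    have "norm (integral\<^sup>L (M n) f - integral\<^sup>L \<mu> f) < r" if "n \<ge> N" for n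
      using abs3[OF a[of n, unfolded e_def] b[unfolded e_def] N[OF that, unfolded e_def real_norm_def] r] by simp
    then show "\<exists>no. \<forall>n\<ge>no. norm (integral\<^sup>L (M n) f - integral\<^sup>L \<mu> f) < r" by blast
  qed
qed


lemma cyl_snoc: "cylinder (u @ [b]) = cylinder u \<inter> {v. v (length u) = b}"
  by (auto simp: cylinder_def nth_append less_Suc_eq)

lemma cyl_split: "measure M (cylinder u) = measure M (cylinder (u @ [False])) + measure M (cylinder (u @ [True]))"
  if "finite_measure M" "sets M = sets Vinf_space"
proof -
  have "cylinder u = cylinder (u @ [False]) \<union> cylinder (u @ [True])"
    unfolding cyl_snoc by auto
  moreover have "cylinder (u @ [False]) \<inter> cylinder (u @ [True]) = {}"
    unfolding cyl_snoc by auto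
  ultimately show ?thesis
    using finite_measure.finite_measure_Union[OF that(1), of "cylinder (u @ [False])" "cylinder (u @ [True])"]
      that(2) by simp
qed

lemma mu_le1: "is_tree x \<Longrightarrow> measure (mu_tree x) (space (mu_tree x)) \<le> 1"
proof -
  assume tr: "is_tree x"
  have "emeasure (mu_tree x) (space (mu_tree x)) = ennreal (measure (mu_tree x) (space (mu_tree x)))"
    by (rule finite_measure.emeasure_eq_measure[OF finite_mu[OF tr]])
  then have "ennreal (measure (mu_tree x) (space (mu_tree x))) \<le> 1" using emeasure_mu_space[OF tr] by simp
  then show ?thesis by (simp add: ennreal_le_1)
qed

theorem theorem2:
  fixes x :: "nat \<Rightarrow> word set"
  assumes trees: "\<And>n. is_tree (x n)"
    and size_inf: "filterlim (\<lambda>n. card (x n)) at_top sequentially"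
  shows "((\<forall>u. convergent (\<lambda>n. subtree_size (x n) u)) \<longleftrightarrow>
            (\<exists>\<mu>. prob_measure_Vinf \<mu> \<and> weak_conv_Vinf (\<lambda>n. mu_tree (x n)) \<mu>))
       \<and> (\<forall>\<mu>. prob_measure_Vinf \<mu> \<and> weak_conv_Vinf (\<lambda>n. mu_tree (x n)) \<mu> \<longrightarrow>
            (\<forall>u. (\<lambda>n. subtree_size (x n) u) \<longlonglongrightarrow> measure \<mu> (cylinder u)))"
proof -
  have part2: "\<forall>\<mu>. prob_measure_Vinf \<mu> \<and> weak_conv_Vinf (\<lambda>n. mu_tree (x n)) \<mu> \<longrightarrow>
            (\<forall>u. (\<lambda>n. subtree_size (x n) u) \<longlonglongrightarrow> measure \<mu> (cylinder u))"
  proof (intro allI impI, elim conjE)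
    fix \<mu> u assume p: "prob_measure_Vinf \<mu>" and w: "weak_conv_Vinf (\<lambda>n. mu_tree (x n)) \<mu>"
    have m: "(\<lambda>n. measure (mu_tree (x n)) (cylinder u)) \<longlonglongrightarrow> measure \<mu> (cylinder u)"
      by (rule weak_cyl[OF p w]) simp
    have "(\<lambda>n. measure (mu_tree (x n)) (cylinder u) - (measure (mu_tree (x n)) (cylinder u) - subtree_size (x n) u))
        \<longlonglongrightarrow> measure \<mu> (cylinder u) - 0"
      by (rule tendsto_diff[OF m diff_0[OF trees size_inf]])
    then show "(\<lambda>n. subtree_size (x n) u) \<longlonglongrightarrow> measure \<mu> (cylinder u)" by simp
  qed
  have fwd: "\<exists>\<mu>. prob_measure_Vinf \<mu> \<and> weak_conv_Vinf (\<lambda>n. mu_tree (x n)) \<mu>"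
    if cv: "\<forall>u. convergent (\<lambda>n. subtree_size (x n) u)"
  proof -
    define F where "F u = lim (\<lambda>n. subtree_size (x n) u)" for u
    have tF: "(\<lambda>n. subtree_size (x n) u) \<longlonglongrightarrow> F u" for u
      using cv unfolding F_def by (simp add: convergent_LIMSEQ_iff)
    have mF: "(\<lambda>n. measure (mu_tree (x n)) (cylinder u)) \<longlonglongrightarrow> F u" for u
    proof -
      have "(\<lambda>n. subtree_size (x n) u + (measure (mu_tree (x n)) (cylinder u) - subtree_size (x n) u))
          \<longlonglongrightarrow> F u + 0"
        by (rule tendsto_add[OF tF diff_0[OF trees size_inf]])
      then show ?thesis by simp
    qed
    have F0: "F [] = 1"
    proof -
      have "\<forall>\<^sub>F n in sequentially. card (x n) \<ge> 1"
        using size_inf by (simp add: filterlim_at_top)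
      then have "\<forall>\<^sub>F n in sequentially. subtree_size (x n) [] = 1"
        by eventually_elim (simp add: subtree_size_def)
      then have "(\<lambda>n. subtree_size (x n) []) \<longlonglongrightarrow> 1" by (rule tendsto_eventually)
      then show ?thesis using tF[of "[]"] LIMSEQ_unique by blast
    qed
    have Fadd: "F u = F (u @ [False]) + F (u @ [True])" for u
    proof -
      have "(\<lambda>n. measure (mu_tree (x n)) (cylinder (u @ [False])) + measure (mu_tree (x n)) (cylinder (u @ [True])))
          \<longlonglongrightarrow> F (u @ [False]) + F (u @ [True])"
        by (rule tendsto_add[OF mF mF])
      moreover have "(\<lambda>n. measure (mu_tree (x n)) (cylinder (u @ [False])) + measure (mu_tree (x n)) (cylinder (u @ [True])))
          = (\<lambda>n. measure (mu_tree (x n)) (cylinder u))"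
        using cyl_split[OF finite_mu[OF trees] sets_mu, symmetric] by (rule ext)
      ultimately have "(\<lambda>n. measure (mu_tree (x n)) (cylinder u)) \<longlonglongrightarrow> F (u @ [False]) + F (u @ [True])"
        by simp
      then show ?thesis using mF[of u] LIMSEQ_unique by blast
    qed
    have Fnn: "F u \<ge> 0" for u
      by (rule LIMSEQ_le_const[OF tF]) (simp add: subtree_size_def)
    obtain \<mu> where \<mu>: "prob_measure_Vinf \<mu>" "\<And>u. measure \<mu> (cylinder u) = F u"
      using construct[OF F0 Fadd Fnn] by blast
    have "weak_conv_Vinf (\<lambda>n. mu_tree (x n)) \<mu>"
      by (rule weak_from_cyl[OF sets_mu finite_mu[OF trees] mu_le1[OF trees] \<mu>(1)])
         (simp add: \<mu>(2) mF)
    then show ?thesis using \<mu>(1) by blast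
  qed
  have bwd: "\<forall>u. convergent (\<lambda>n. subtree_size (x n) u)"
    if ex: "\<exists>\<mu>. prob_measure_Vinf \<mu> \<and> weak_conv_Vinf (\<lambda>n. mu_tree (x n)) \<mu>"
  proof
    fix u
    obtain \<mu> where "prob_measure_Vinf \<mu> \<and> weak_conv_Vinf (\<lambda>n. mu_tree (x n)) \<mu>" using ex by blast
    then have "(\<lambda>n. subtree_size (x n) u) \<longlonglongrightarrow> measure \<mu> (cylinder u)" using part2 by blast
    then show "convergent (\<lambda>n. subtree_size (x n) u)" by (rule convergentI)
  qed
  have "(\<forall>u. convergent (\<lambda>n. subtree_size (x n) u)) \<longleftrightarrow>
            (\<exists>\<mu>. prob_measure_Vinf \<mu> \<and> weak_conv_Vinf (\<lambda>n. mu_tree (x n)) \<mu>)"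
    using fwd bwd by (rule iffI)
  then show ?thesis using part2 by (rule conjI)
qed


end
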